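(* For non-negative integers $p_1,p_2,r$ and $x_1,x_2\in\mathbb{C}$, $$\sum_{l=0}^{p_1+p_2}S_{1,x_1}^{1,x_2,p_2}(p_1,l)\,(-1)^{l}(l+r)!=r!\,(x_1-r-1)^{p_1}(x_2-r-1)^{p_2}.$$ Consequently $B^{(0)}_{p_1,p_2}(x_1,x_2)=(x_1-1)^{p_1}(x_2-1)^{p_2}$ and $B^{(-1)}_{p_1,p_2}(x_1,x_2)=(x_1-2)^{p_1}(x_2-2)^{p_2}$.
   Context: For non-negative integers $p_1,p_2,l$ and $x_1,x_2\in\mathbb{C}$, the generalized Stirling numbers are $$S_{1,x_1}^{1,x_2,p_2}(p_1,l)=\frac{1}{l!}\sum_{j=0}^{l}(-1)^{j}\binom{l}{j}(l-j+x_1)^{p_1}(l-j+x_2)^{p_2}.$$ For an integer $k$, the bi-variate poly-Bernoulli polynomial is $$B^{(k)}_{p_1,p_2}(x_1,x_2)=\sum_{l=0}^{p_1+p_2}S_{1,x_1}^{1,x_2,p_2}(p_1,l)\frac{(-1)^{l}\,l!}{(l+1)^{k}}.$$ *)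

theory Defs
  imports Complex_Main
begin

definition genStirling :: "complex \<Rightarrow> complex \<Rightarrow> nat \<Rightarrow> nat \<Rightarrow> nat \<Rightarrow> complex" where
  "genStirling x1 x2 p2 p1 l =
     (1 / of_nat (fact l)) *
     (\<Sum>j=0..l. (-1) ^ j * of_nat (l choose j) *
        (of_nat (l - j) + x1) ^ p1 * (of_nat (l - j) + x2) ^ p2)"

definition polyBernoulli2 :: "int \<Rightarrow> nat \<Rightarrow> nat \<Rightarrow> complex \<Rightarrow> complex \<Rightarrow> complex" where
  "polyBernoulli2 k p1 p2 x1 x2 =
     (\<Sum>l=0..p1+p2. genStirling x1 x2 p2 p1 l * (-1) ^ l * of_nat (fact l)
        / (of_nat (l + 1)) powi k)"

end

theory Submission
  imports Defs "HOL-Computational_Algebra.Polynomial"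
begin

definition DD :: "(complex \<Rightarrow> complex) \<Rightarrow> complex \<Rightarrow> complex" where
  "DD g z = g (z + 1) - g z"

lemma DD_pow:
  "(DD^^l) g z = (\<Sum>j=0..l. (-1)^j * of_nat (l choose j) * g (z + of_nat (l - j)))"
proof (induction l arbitrary: z)
  case 0
  then show ?case by simp
next
  case (Suc l)
  have ch: "\<And>j. (of_nat (Suc l choose j)::complex) = of_nat (l choose j) + (if j = 0 then 0 else of_nat (l choose (j - 1)))"
    by (case_tac j) auto
  have "(\<Sum>j=0..Suc l. (-1)^j * of_nat (Suc l choose j) * g (z + of_nat (Suc l - j)))
     = (\<Sum>j=0..Suc l. (-1)^j * of_nat (l choose j) * g (z + of_nat (Suc l - j)))
     + (\<Sum>j=0..Suc l. (if j = 0 then 0 else (-1)^j * of_nat (l choose (j - 1)) * g (z + of_nat (Suc l - j))))"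
    unfolding sum.distrib[symmetric] by (rule sum.cong) (simp_all add: ch algebra_simps)
  also have "(\<Sum>j=0..Suc l. (-1)^j * of_nat (l choose j) * g (z + of_nat (Suc l - j)))
     = (\<Sum>j=0..l. (-1)^j * of_nat (l choose j) * g ((z + 1) + of_nat (l - j)))"
    by (simp add: sum.atLeast0_atMost_Suc Suc_diff_le algebra_simps)
  also have "(\<Sum>j=0..Suc l. (if j = 0 then 0 else (-1)^j * of_nat (l choose (j - 1)) * g (z + of_nat (Suc l - j))))
     = - (\<Sum>j=0..l. (-1)^j * of_nat (l choose j) * g (z + of_nat (l - j)))"
    unfolding sum.atLeast0_atMost_Suc_shift comp_def sum_negf[symmetric]
    by simp
  finally show ?case using Suc by (simp add: DD_def)
qed

lemma DD_zero: "(DD^^N) (\<lambda>_. 0) = (\<lambda>_. 0)"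
  by (induction N) (auto simp: DD_def)

lemma DD_poly: "DD (poly P) = poly (pcompose P [:1,1:] - P)"
  by (rule ext) (simp add: DD_def poly_pcompose algebra_simps)

lemma deg_drop:
  fixes P :: "complex poly"
  assumes "degree P > 0"
  shows "degree (pcompose P [:1,1:] - P) < degree P"
proof -
  let ?Q = "pcompose P [:1,1:]"
  have dQ: "degree ?Q = degree P" by (simp add: degree_pcompose)
  have lQ: "lead_coeff ?Q = lead_coeff P" by (simp add: lead_coeff_comp)
  have c: "coeff (?Q - P) (degree P) = 0" using dQ lQ by simp
  have le: "degree (?Q - P) \<le> degree P" using degree_diff_le[of ?Q "degree P" P] dQ by simp
  show ?thesis
  proof (rule ccontr)
    assume "\<not> ?thesis"
    then have "degree (?Q - P) = degree P" using le by simp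
    then have "?Q - P = 0" using c by (metis leading_coeff_0_iff)
    then show False using \<open>degree (?Q - P) = degree P\<close> assms by simp
  qed
qed

lemma DD_kill: "degree (P::complex poly) < N \<Longrightarrow> (DD^^N) (poly P) = (\<lambda>_. 0)"
proof (induction N arbitrary: P)
  case 0
  then show ?case by simp
next
  case (Suc N)
  have e: "(DD^^Suc N) (poly P) = (DD^^N) (poly (pcompose P [:1,1:] - P))"
    unfolding funpow_Suc_right comp_def DD_poly by simp
  show ?case
  proof (cases "degree P = 0")
    case True
    then obtain c where "P = [:c:]" by (metis degree_eq_zeroE)
    then have "pcompose P [:1,1:] - P = 0" by simp
    moreover have "poly (0::complex poly) = (\<lambda>_. 0)" by auto
    ultimately show ?thesis using e DD_zero by simp
  next
    case False
    then have "degree (pcompose P [:1,1:] - P) < N" using deg_drop[of P] Suc.prems by simp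
    then show ?thesis using e Suc.IH by simp
  qed
qed

lemma newton:
  "(DD^^N) g = (\<lambda>_. 0) \<Longrightarrow> g (of_int t) = (\<Sum>l<N. (DD^^l) g 0 * (of_int t gchoose l))"
proof (induction N arbitrary: g t)
  case 0
  then show ?case by simp
next
  case (Suc N)
  have "(DD^^N) (DD g) = (\<lambda>_. 0)" using Suc.prems unfolding funpow_Suc_right comp_def by simp
  note IH = Suc.IH[OF this]
  define h where "h z = g z - (\<Sum>l<Suc N. (DD^^l) g 0 * (z gchoose l))" for z
  have step: "h (of_int t + 1) = h (of_int t)" for t :: int
  proof -
    have "(\<Sum>l<Suc N. (DD^^l) g 0 * ((of_int t + 1) gchoose l)) - (\<Sum>l<Suc N. (DD^^l) g 0 * (of_int t gchoose l))
        = (\<Sum>l<Suc N. (DD^^l) g 0 * (((of_int t + 1) gchoose l) - (of_int t gchoose l)))"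
      by (simp add: sum_subtractf algebra_simps)
    also have "\<dots> = (\<Sum>l<N. (DD^^Suc l) g 0 * (of_int t gchoose l))"
      unfolding sum.lessThan_Suc_shift by (simp add: gbinomial_Suc_Suc)
    also have "\<dots> = DD g (of_int t)"
      by (simp only: IH[of t] funpow_Suc_right comp_def)
    finally show ?thesis by (simp add: h_def DD_def algebra_simps)
  qed
  have h0: "h 0 = 0"
    unfolding h_def sum.lessThan_Suc_shift by (simp add: gbinomial_0_left)
  have "h (of_int i) = 0" for i :: int
  proof (induction i rule: int_induct[where k=0])
    case base then show ?case using h0 by simp
  next
    case (step1 i) then show ?case using step[of i] by simp
  next
    case (step2 i) then show ?case using step[of "i - 1"] by simp
  qed
  then show ?case by (simp add: h_def)
qed

lemma main1:
  fixes p1 p2 r :: nat and x1 x2 :: complex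
  shows "(\<Sum>l=0..p1+p2. genStirling x1 x2 p2 p1 l * (-1) ^ l * of_nat (fact (l + r)))
           = of_nat (fact r) * (x1 - of_nat r - 1) ^ p1 * (x2 - of_nat r - 1) ^ p2"
proof -
  define g where "g z = (z + x1)^p1 * (z + x2)^p2" for z :: complex
  define P where "P = [:x1,1:]^p1 * [:x2,1:]^p2"
  have gP: "g = poly P" by (rule ext) (simp add: g_def P_def algebra_simps)
  have degP: "degree P = p1 + p2"
    unfolding P_def by (simp add: degree_mult_eq degree_power_eq)
  have kill: "(DD^^Suc (p1+p2)) g = (\<lambda>_. 0)" unfolding gP by (rule DD_kill) (simp add: degP)
  have N: "g (of_int (-(int r + 1))) = (\<Sum>l<Suc (p1+p2). (DD^^l) g 0 * (of_int (-(int r + 1)) gchoose l))"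
    by (rule newton[OF kill])
  have Dl: "(DD^^l) g 0 = of_nat (fact l) * genStirling x1 x2 p2 p1 l" for l
    unfolding DD_pow genStirling_def g_def by (simp add: mult.assoc)
  have gc: "(of_int (-(int r + 1)) :: complex) gchoose l = (-1)^l * of_nat ((r + l) choose l)" for l
  proof -
    have "(of_int (-(int r + 1)) :: complex) = - (of_nat r + 1)" by simp
    then have "(of_int (-(int r + 1)) :: complex) gchoose l = (-1)^l * ((of_nat r + 1 + of_nat l - 1) gchoose l)"
      using gbinomial_minus[of "of_nat r + 1 :: complex" l] by simp
    also have "(of_nat r + 1 + of_nat l - 1 :: complex) = of_nat (r + l)" by simp
    finally show ?thesis by (simp add: binomial_gbinomial)
  qed
  have fl: "(of_nat (fact r) :: complex) * (of_nat (fact l) * of_nat ((r + l) choose l)) = of_nat (fact (l + r))" for l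
  proof -
    have "fact l * fact (r + l - l) * ((r + l) choose l) = (fact (r + l) :: nat)"
      by (rule binomial_fact_lemma) simp
    then have "fact r * (fact l * ((r + l) choose l)) = (fact (l + r) :: nat)" by (simp add: ac_simps)
    then show ?thesis by (metis of_nat_mult)
  qed
  have "(\<Sum>l=0..p1+p2. genStirling x1 x2 p2 p1 l * (-1) ^ l * of_nat (fact (l + r)))
      = (\<Sum>l<Suc (p1+p2). of_nat (fact r) * ((DD^^l) g 0 * (of_int (-(int r + 1)) gchoose l)))"
    unfolding lessThan_Suc_atMost atLeast0AtMost
  proof (rule sum.cong)
    fix l assume "l \<in> {..p1+p2}"
    show "genStirling x1 x2 p2 p1 l * (-1) ^ l * of_nat (fact (l + r))
        = of_nat (fact r) * ((DD^^l) g 0 * (of_int (-(int r + 1)) gchoose l))"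
      unfolding Dl gc fl[symmetric] by (simp add: ac_simps)
  qed simp
  also have "\<dots> = of_nat (fact r) * g (of_int (-(int r + 1)))"
    by (simp only: N sum_distrib_left)
  also have "\<dots> = of_nat (fact r) * (x1 - of_nat r - 1) ^ p1 * (x2 - of_nat r - 1) ^ p2"
    by (simp add: g_def algebra_simps)
  finally show ?thesis .
qed

theorem mainTheorem7:
  fixes p1 p2 r :: nat and x1 x2 :: complex
  shows "((\<Sum>l=0..p1+p2. genStirling x1 x2 p2 p1 l * (-1) ^ l * of_nat (fact (l + r)))
           = of_nat (fact r) * (x1 - of_nat r - 1) ^ p1 * (x2 - of_nat r - 1) ^ p2)
       \<and> polyBernoulli2 0 p1 p2 x1 x2 = (x1 - 1) ^ p1 * (x2 - 1) ^ p2
       \<and> polyBernoulli2 (-1) p1 p2 x1 x2 = (x1 - 2) ^ p1 * (x2 - 2) ^ p2"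
proof (intro conjI)
  show "polyBernoulli2 0 p1 p2 x1 x2 = (x1 - 1) ^ p1 * (x2 - 1) ^ p2"
    using main1[of x1 x2 p2 p1 0] unfolding polyBernoulli2_def by simp
  have "polyBernoulli2 (-1) p1 p2 x1 x2
      = (\<Sum>l=0..p1+p2. genStirling x1 x2 p2 p1 l * (-1) ^ l * of_nat (fact (l + 1)))"
    unfolding polyBernoulli2_def
    by (rule sum.cong) (simp_all add: power_int_minus divide_inverse algebra_simps)
  also have "\<dots> = (x1 - 2) ^ p1 * (x2 - 2) ^ p2"
    using main1[of x1 x2 p2 p1 1] by (simp add: algebra_simps)
  finally show "polyBernoulli2 (-1) p1 p2 x1 x2 = (x1 - 2) ^ p1 * (x2 - 2) ^ p2" .
qed (rule main1)

end
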